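(* SP, BTI, WF, PCI, IRE and RPI hold for the LTSIs of CCSKP (CCSK with proof labels) and CCSK.
   Context: CCSK processes: $X ::= \mathbf{0} \mid \alpha.X \mid X\backslash\lambda \mid X+Y \mid X \mid Y \mid \alpha[k].X$, where $\alpha$ ranges over names, co-names and $\tau$, $\lambda$ over non-$\tau$ labels, and $k$ over keys; $\mathrm{keys}(X)$ is the set of keys in $X$, and $X$ is standard if $\mathrm{keys}(X)=\emptyset$. Only reachable processes (reachable by a path from a standard process) are considered. CCSKP forward rules (with proof keyed labels $\theta$ built from strings over $\mid_L,\mid_R,+_L,+_R$, actions $\alpha[k]$ and synchronisation pairs $\langle\upsilon_1\lambda[k],\upsilon_2\overline\lambda[k]\rangle$, each having a key): act: $\alpha.X \to^{\alpha[k]} \alpha[k].X$ if $X$ standard; pre: $\alpha[k].X \to^{\theta} \alpha[k].X'$ if $X\to^\theta X'$ and the key of $\theta$ is not $k$; res: $X\backslash a \to^\theta X'\backslash a$ if $X\to^\theta X'$ and the action of $\theta$ is not $a$ or $\overline a$; par: $X\mid Y \to^{\mid_L\theta} X'\mid Y$ if $X\to^\theta X'$ and the key of $\theta$ is not in $\mathrm{keys}(Y)$ (symmetrically on the right); syn: $X\mid Y \to^{\langle\upsilon_L\lambda[k],\upsilon_R\overline\lambda[k]\rangle} X'\mid Y'$ if $X\to^{\upsilon_L\lambda[k]}X'$ and $Y\to^{\upsilon_R\overline\lambda[k]}Y'$; sum: $X+Y\to^{+_L\theta}X'+Y$ if $X\to^\theta X'$ and $Y$ standard (symmetrically on the right).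 Backward transitions are the inverses of forward ones. CCSK has the same rules with labels $\alpha[k]$ only (proof part erased); CCSK and CCSKP transitions are in bijection. Two transitions are connected if there is a path from the source of one to the target of the other. The independence relation: two transitions are independent iff they are connected and their proof keyed labels (for CCSK, those of the corresponding CCSKP transitions) are independent, where label independence is the least relation with: $+_d\theta$ independent of $+_d\theta'$ if $\theta$ independent of $\theta'$; $\mid_d\theta$ independent of $\mid_d\theta'$ if $\theta$ independent of $\theta'$; $\mid_d\theta$ independent of $\mid_{\overline d}\theta'$ if their keys differ; $\mid_d\theta$ independent of $\langle\theta_L,\theta_R\rangle$ (and symmetrically) if $\theta$ independent of $\theta_d$; $\langle\theta_1,\theta_2\rangle$ independent of $\langle\theta'_1,\theta'_2\rangle$ if $\theta_1$ independent of $\theta'_1$ and $\theta_2$ independent of $\theta'_2$. An LTSI is a combined forward/backward LTS with an irreflexive symmetric independence relation on transitions. Axioms: SP (square property): coinitial independent $t:P\to^\alpha Q$, $u:P\to^\beta R$ admit cofinal $u':Q\to^\beta S$, $t':R\to^\alpha S$. BTI: distinct coinitial backward transitions are independent. WF: no infinite backward computation. PCI: in such a square with $t$ independent of $u$, $u'$ is independent of the inverse of $t$. IRE: if $t\sim t'$ and $t'$ independent of $u$ then $t$ independent of $u$, where $\sim$ (event equivalence) is the least equivalence relating opposite sides $t,t'$ of squares built from independent coinitial $t,u$. RPI: if $t$ independent of $t'$ then the inverse of $t$ is independent of $t'$. *)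

theory Defs
  imports Main
begin

datatype 'n act = Name 'n | CoName 'n | Tau

fun compl :: "'n act \<Rightarrow> 'n act" where
  "compl (Name a) = CoName a"
| "compl (CoName a) = Name a"
| "compl Tau = Tau"

text \<open>Processes: Nil, prefix, restriction (by a name a; restricting by the
co-name has the same effect), choice, parallel, keyed prefix.\<close>
datatype ('n, 'k) proc =
    Nil
  | Pre "'n act" "('n, 'k) proc"
  | Res "('n, 'k) proc" 'n
  | Sum "('n, 'k) proc" "('n, 'k) proc"
  | Par "('n, 'k) proc" "('n, 'k) proc"
  | Keyed "'n act" 'k "('n, 'k) proc"

fun keys :: "('n, 'k) proc \<Rightarrow> 'k set" where
  "keys Nil = {}"
| "keys (Pre a X) = keys X"
| "keys (Res X a) = keys X"
| "keys (Sum X Y) = keys X \<union> keys Y"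
| "keys (Par X Y) = keys X \<union> keys Y"
| "keys (Keyed a k X) = insert k (keys X)"

definition std :: "('n, 'k) proc \<Rightarrow> bool" where
  "std X \<longleftrightarrow> keys X = {}"

datatype side = L | R

fun opp :: "side \<Rightarrow> side" where
  "opp L = R" | "opp R = L"

datatype ('n, 'k) plabel =
    PAct "'n act" 'k
  | PPar side "('n, 'k) plabel"
  | PSum side "('n, 'k) plabel"
  | PSyn "('n, 'k) plabel" "('n, 'k) plabel"

fun lkey :: "('n, 'k) plabel \<Rightarrow> 'k" where
  "lkey (PAct a k) = k"
| "lkey (PPar d t) = lkey t"
| "lkey (PSum d t) = lkey t"
| "lkey (PSyn t1 t2) = lkey t1"

fun lact :: "('n, 'k) plabel \<Rightarrow> 'n act" where
  "lact (PAct a k) = a"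
| "lact (PPar d t) = lact t"
| "lact (PSum d t) = lact t"
| "lact (PSyn t1 t2) = Tau"

fun sel :: "side \<Rightarrow> 'a \<Rightarrow> 'a \<Rightarrow> 'a" where
  "sel L x y = x" | "sel R x y = y"

inductive lind :: "('n, 'k) plabel \<Rightarrow> ('n, 'k) plabel \<Rightarrow> bool" where
  sum: "lind t t' \<Longrightarrow> lind (PSum d t) (PSum d t')"
| par: "lind t t' \<Longrightarrow> lind (PPar d t) (PPar d t')"
| par_opp: "lkey t \<noteq> lkey t' \<Longrightarrow> lind (PPar d t) (PPar (opp d) t')"
| par_syn: "lind t (sel d tL tR) \<Longrightarrow> lind (PPar d t) (PSyn tL tR)"
| syn_par: "lind (sel d tL tR) t \<Longrightarrow> lind (PSyn tL tR) (PPar d t)"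
| syn_syn: "lind t1 t1' \<Longrightarrow> lind t2 t2' \<Longrightarrow> lind (PSyn t1 t2) (PSyn t1' t2')"

inductive fwdP :: "('n, 'k) proc \<Rightarrow> ('n, 'k) plabel \<Rightarrow> ('n, 'k) proc \<Rightarrow> bool" where
  act: "std X \<Longrightarrow> fwdP (Pre a X) (PAct a k) (Keyed a k X)"
| pre: "fwdP X t X' \<Longrightarrow> lkey t \<noteq> k \<Longrightarrow> fwdP (Keyed a k X) t (Keyed a k X')"
| res: "fwdP X t X' \<Longrightarrow> lact t \<noteq> Name a \<Longrightarrow> lact t \<noteq> CoName a \<Longrightarrow>
        fwdP (Res X a) t (Res X' a)"
| parL: "fwdP X t X' \<Longrightarrow> lkey t \<notin> keys Y \<Longrightarrow> fwdP (Par X Y) (PPar L t) (Par X' Y)"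
| parR: "fwdP Y t Y' \<Longrightarrow> lkey t \<notin> keys X \<Longrightarrow> fwdP (Par X Y) (PPar R t) (Par X Y')"
| syn: "fwdP X t1 X' \<Longrightarrow> fwdP Y t2 Y' \<Longrightarrow> lact t1 \<noteq> Tau \<Longrightarrow>
        lact t2 = compl (lact t1) \<Longrightarrow> lkey t1 = lkey t2 \<Longrightarrow>
        fwdP (Par X Y) (PSyn t1 t2) (Par X' Y')"
| sumL: "fwdP X t X' \<Longrightarrow> std Y \<Longrightarrow> fwdP (Sum X Y) (PSum L t) (Sum X' Y)"
| sumR: "fwdP Y t Y' \<Longrightarrow> std X \<Longrightarrow> fwdP (Sum X Y) (PSum R t) (Sum X Y')"

text \<open>CCSK forward transitions, labels \<open>\<alpha>[k]\<close> represented as pairs.\<close>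
inductive fwdK :: "('n, 'k) proc \<Rightarrow> 'n act \<times> 'k \<Rightarrow> ('n, 'k) proc \<Rightarrow> bool" where
  act: "std X \<Longrightarrow> fwdK (Pre a X) (a, k) (Keyed a k X)"
| pre: "fwdK X (b, j) X' \<Longrightarrow> j \<noteq> k \<Longrightarrow> fwdK (Keyed a k X) (b, j) (Keyed a k X')"
| res: "fwdK X (b, j) X' \<Longrightarrow> b \<noteq> Name a \<Longrightarrow> b \<noteq> CoName a \<Longrightarrow>
        fwdK (Res X a) (b, j) (Res X' a)"
| parL: "fwdK X (b, j) X' \<Longrightarrow> j \<notin> keys Y \<Longrightarrow> fwdK (Par X Y) (b, j) (Par X' Y)"
| parR: "fwdK Y (b, j) Y' \<Longrightarrow> j \<notin> keys X \<Longrightarrow> fwdK (Par X Y) (b, j) (Par X Y')"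
| syn: "fwdK X (b, k) X' \<Longrightarrow> fwdK Y (compl b, k) Y' \<Longrightarrow> b \<noteq> Tau \<Longrightarrow>
        fwdK (Par X Y) (Tau, k) (Par X' Y')"
| sumL: "fwdK X l X' \<Longrightarrow> std Y \<Longrightarrow> fwdK (Sum X Y) l (Sum X' Y)"
| sumR: "fwdK Y l Y' \<Longrightarrow> std X \<Longrightarrow> fwdK (Sum X Y) l (Sum X Y')"

definition erase :: "('n, 'k) plabel \<Rightarrow> 'n act \<times> 'k" where
  "erase t = (lact t, lkey t)"

text \<open>A transition: source, direction (True = forward, False = backward), label, target.\<close>
datatype ('s, 'l) tr = Tr (src: 's) (fw: bool) (lab: 'l) (tgt: 's)

fun inv_tr :: "('s, 'l) tr \<Rightarrow> ('s, 'l) tr" where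
  "inv_tr (Tr P d l Q) = Tr Q (\<not> d) l P"

definition comb :: "('s \<Rightarrow> 'l \<Rightarrow> 's \<Rightarrow> bool) \<Rightarrow> ('s, 'l) tr set" where
  "comb f = {Tr P d l Q | P d l Q. (d \<and> f P l Q) \<or> (\<not> d \<and> f Q l P)}"

definition step_rel :: "('s, 'l) tr set \<Rightarrow> ('s \<times> 's) set" where
  "step_rel T = {(src t, tgt t) | t. t \<in> T}"

definition reachable :: "(('n, 'k) proc, 'l) tr set \<Rightarrow> ('n, 'k) proc set" where
  "reachable C = {P. \<exists>P0. std P0 \<and> (P0, P) \<in> (step_rel C)\<^sup>*}"

definition lts :: "(('n, 'k) proc \<Rightarrow> 'l \<Rightarrow> ('n, 'k) proc \<Rightarrow> bool) \<Rightarrow> (('n, 'k) proc, 'l) tr set" where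
  "lts f = {t \<in> comb f. src t \<in> reachable (comb f)}"

definition connected :: "('s, 'l) tr set \<Rightarrow> ('s, 'l) tr \<Rightarrow> ('s, 'l) tr \<Rightarrow> bool" where
  "connected T t u \<longleftrightarrow>
     (src t, tgt u) \<in> (step_rel T)\<^sup>* \<or> (src u, tgt t) \<in> (step_rel T)\<^sup>*"

definition TP :: "(('n, 'k) proc, ('n, 'k) plabel) tr set" where
  "TP = lts fwdP"

definition indP :: "(('n, 'k) proc, ('n, 'k) plabel) tr \<Rightarrow> (('n, 'k) proc, ('n, 'k) plabel) tr \<Rightarrow> bool" where
  "indP t u \<longleftrightarrow> t \<in> TP \<and> u \<in> TP \<and> connected TP t u \<and> lind (lab t) (lab u)"

definition TK :: "(('n, 'k) proc, 'n act \<times> 'k) tr set" where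
  "TK = lts fwdK"

definition indK :: "(('n, 'k) proc, 'n act \<times> 'k) tr \<Rightarrow> (('n, 'k) proc, 'n act \<times> 'k) tr \<Rightarrow> bool" where
  "indK t u \<longleftrightarrow> t \<in> TK \<and> u \<in> TK \<and> connected TK t u \<and>
     (\<exists>\<theta> \<theta>'. Tr (src t) (fw t) \<theta> (tgt t) \<in> TP \<and> erase \<theta> = lab t \<and>
             Tr (src u) (fw u) \<theta>' (tgt u) \<in> TP \<and> erase \<theta>' = lab u \<and>
             lind \<theta> \<theta>')"

definition square :: "('s, 'l) tr set \<Rightarrow> ('s, 'l) tr \<Rightarrow> ('s, 'l) tr \<Rightarrow> ('s, 'l) tr \<Rightarrow> ('s, 'l) tr \<Rightarrow> bool" where
  "square T t u u' t' \<longleftrightarrow> t \<in> T \<and> u \<in> T \<and> u' \<in> T \<and> t' \<in> T \<and>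
     src t = src u \<and> src u' = tgt t \<and> src t' = tgt u \<and> tgt u' = tgt t' \<and>
     lab u' = lab u \<and> fw u' = fw u \<and> lab t' = lab t \<and> fw t' = fw t"

definition SP :: "('s, 'l) tr set \<Rightarrow> (('s, 'l) tr \<Rightarrow> ('s, 'l) tr \<Rightarrow> bool) \<Rightarrow> bool" where
  "SP T ind \<longleftrightarrow> (\<forall>t\<in>T. \<forall>u\<in>T. src t = src u \<and> ind t u \<longrightarrow> (\<exists>u' t'. square T t u u' t'))"

definition BTI :: "('s, 'l) tr set \<Rightarrow> (('s, 'l) tr \<Rightarrow> ('s, 'l) tr \<Rightarrow> bool) \<Rightarrow> bool" where
  "BTI T ind \<longleftrightarrow> (\<forall>t\<in>T. \<forall>u\<in>T. \<not> fw t \<and> \<not> fw u \<and> src t = src u \<and> t \<noteq> u \<longrightarrow> ind t u)"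

definition WF :: "('s, 'l) tr set \<Rightarrow> bool" where
  "WF T \<longleftrightarrow> \<not> (\<exists>f :: nat \<Rightarrow> ('s, 'l) tr. \<forall>n. f n \<in> T \<and> \<not> fw (f n) \<and> tgt (f n) = src (f (Suc n)))"

definition PCI :: "('s, 'l) tr set \<Rightarrow> (('s, 'l) tr \<Rightarrow> ('s, 'l) tr \<Rightarrow> bool) \<Rightarrow> bool" where
  "PCI T ind \<longleftrightarrow> (\<forall>t u u' t'. square T t u u' t' \<and> ind t u \<longrightarrow> ind u' (inv_tr t))"

definition ev_eq :: "('s, 'l) tr set \<Rightarrow> (('s, 'l) tr \<Rightarrow> ('s, 'l) tr \<Rightarrow> bool) \<Rightarrow> (('s, 'l) tr \<times> ('s, 'l) tr) set" where
  "ev_eq T ind = (let S = {(t, t') | t t'. \<exists>u u'. square T t u u' t' \<and> ind t u} in (S \<union> S\<inverse>)\<^sup>*)"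

definition IRE :: "('s, 'l) tr set \<Rightarrow> (('s, 'l) tr \<Rightarrow> ('s, 'l) tr \<Rightarrow> bool) \<Rightarrow> bool" where
  "IRE T ind \<longleftrightarrow> (\<forall>t\<in>T. \<forall>t'\<in>T. \<forall>u\<in>T. (t, t') \<in> ev_eq T ind \<and> ind t' u \<longrightarrow> ind t u)"

definition RPI :: "('s, 'l) tr set \<Rightarrow> (('s, 'l) tr \<Rightarrow> ('s, 'l) tr \<Rightarrow> bool) \<Rightarrow> bool" where
  "RPI T ind \<longleftrightarrow> (\<forall>t\<in>T. \<forall>t'\<in>T. ind t t' \<longrightarrow> ind (inv_tr t) t')"

definition all_axioms :: "('s, 'l) tr set \<Rightarrow> (('s, 'l) tr \<Rightarrow> ('s, 'l) tr \<Rightarrow> bool) \<Rightarrow> bool" where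
  "all_axioms T ind \<longleftrightarrow> SP T ind \<and> BTI T ind \<and> WF T \<and> PCI T ind \<and> IRE T ind \<and> RPI T ind"

end

theory Submission
  imports Defs
begin


fun wfl :: "('n,'k) plabel \<Rightarrow> bool" where
  "wfl (PAct a k) = True"
| "wfl (PPar d t) = wfl t"
| "wfl (PSum d t) = wfl t"
| "wfl (PSyn t1 t2) = (wfl t1 \<and> wfl t2 \<and> lkey t1 = lkey t2)"

lemma fwdP_keys: "fwdP P t Q \<Longrightarrow> keys Q = insert (lkey t) (keys P) \<and> lkey t \<notin> keys P"
  by (induction rule: fwdP.induct) (auto simp: std_def)

lemma fwdP_wfl: "fwdP P t Q \<Longrightarrow> wfl t"
  by (induction rule: fwdP.induct) auto

lemma fwdP_neq: "fwdP P t Q \<Longrightarrow> P \<noteq> Q"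
  using fwdP_keys by blast

lemma fwdP_nstd: "fwdP P t Q \<Longrightarrow> \<not> std Q"
  using fwdP_keys unfolding std_def by blast

lemma lind_sym: "lind a b \<Longrightarrow> lind b a"
proof (induction rule: lind.induct)
  case (par_opp t t' d)
  then show ?case using lind.par_opp[of t' t "opp d"] by (cases d) auto
qed (simp_all add: lind.sum lind.par lind.par_syn lind.syn_par lind.syn_syn)

lemma lind_key: "lind a b \<Longrightarrow> wfl a \<Longrightarrow> wfl b \<Longrightarrow> lkey a \<noteq> lkey b"
proof (induction rule: lind.induct)
  case (par_syn t d tL tR) then show ?case by (cases d) auto
next
  case (syn_par d tL tR t) then show ?case by (cases d) auto
qed auto

lemma lind_PAct1[simp]: "\<not> lind (PAct a k) x" by (auto elim: lind.cases)
lemma lind_PAct2[simp]: "\<not> lind x (PAct a k)" by (auto elim: lind.cases)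
lemma lind_PP[simp]: "lind (PPar d t) (PPar d' t') \<longleftrightarrow> (d = d' \<and> lind t t') \<or> (d' = opp d \<and> lkey t \<noteq> lkey t')"
  by (auto elim: lind.cases intro: lind.intros)
lemma lind_PS[simp]: "lind (PPar d t) (PSyn a b) \<longleftrightarrow> lind t (sel d a b)"
  by (auto elim: lind.cases intro: lind.intros)
lemma lind_SP[simp]: "lind (PSyn a b) (PPar d t) \<longleftrightarrow> lind (sel d a b) t"
  by (auto elim: lind.cases intro: lind.intros)
lemma lind_SS[simp]: "lind (PSyn a b) (PSyn a' b') \<longleftrightarrow> lind a a' \<and> lind b b'"
  by (auto elim: lind.cases intro: lind.intros)
lemma lind_UU[simp]: "lind (PSum d t) (PSum d' t') \<longleftrightarrow> d = d' \<and> lind t t'"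
  by (auto elim: lind.cases intro: lind.intros)
lemma lind_U1[simp]: "\<not> lind (PSum d t) (PPar d' t')" "\<not> lind (PSum d t) (PSyn a b)"
  "\<not> lind (PPar d' t') (PSum d t)" "\<not> lind (PSyn a b) (PSum d t)"
  by (auto elim: lind.cases)

lemma fwdP_kin: "fwdP P t Q \<Longrightarrow> lkey t \<in> keys Q" using fwdP_keys by blast
lemma fwdP_knot: "fwdP P t Q \<Longrightarrow> lkey t \<notin> keys P" using fwdP_keys by blast
lemma fwdP_ksub: "fwdP P t Q \<Longrightarrow> keys P \<subseteq> keys Q" using fwdP_keys by blast

lemma ParT_E:
  assumes "fwdP Q t (Par X Y)"
  obtains (pl) X0 t0 where "Q = Par X0 Y" "t = PPar L t0" "fwdP X0 t0 X" "lkey t0 \<notin> keys Y"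
  | (pr) Y0 t0 where "Q = Par X Y0" "t = PPar R t0" "fwdP Y0 t0 Y" "lkey t0 \<notin> keys X"
  | (ps) X0 Y0 t1 t2 where "Q = Par X0 Y0" "t = PSyn t1 t2" "fwdP X0 t1 X" "fwdP Y0 t2 Y"
      "lact t1 \<noteq> Tau" "lact t2 = compl (lact t1)" "lkey t1 = lkey t2"
  using assms by cases auto

lemma ParS_E:
  assumes "fwdP (Par X Y) t Q"
  obtains (pl) X0 t0 where "Q = Par X0 Y" "t = PPar L t0" "fwdP X t0 X0" "lkey t0 \<notin> keys Y"
  | (pr) Y0 t0 where "Q = Par X Y0" "t = PPar R t0" "fwdP Y t0 Y0" "lkey t0 \<notin> keys X"
  | (ps) X0 Y0 t1 t2 where "Q = Par X0 Y0" "t = PSyn t1 t2" "fwdP X t1 X0" "fwdP Y t2 Y0"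
      "lact t1 \<noteq> Tau" "lact t2 = compl (lact t1)" "lkey t1 = lkey t2"
  using assms by cases auto

lemma KeyedT_E:
  assumes "fwdP Q t (Keyed a k X)"
  obtains (ka) "Q = Pre a X" "t = PAct a k" "std X"
  | (kp) X0 where "Q = Keyed a k X0" "fwdP X0 t X" "lkey t \<noteq> k"
  using assms by cases auto

lemma KeyedS_E:
  assumes "fwdP (Keyed a k X) t Q"
  obtains (kp) X0 where "Q = Keyed a k X0" "fwdP X t X0" "lkey t \<noteq> k"
  using assms by cases auto

lemma PreS_E:
  assumes "fwdP (Pre a X) t Q"
  obtains (ka) k where "Q = Keyed a k X" "t = PAct a k" "std X"
  using assms by cases auto

lemma PreT_E: "fwdP Q t (Pre a X) \<Longrightarrow> False"
  by (auto elim: fwdP.cases)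

lemma ResT_E:
  assumes "fwdP Q t (Res X a)"
  obtains X0 where "Q = Res X0 a" "fwdP X0 t X" "lact t \<noteq> Name a" "lact t \<noteq> CoName a"
  using assms by cases auto

lemma ResS_E:
  assumes "fwdP (Res X a) t Q"
  obtains X0 where "Q = Res X0 a" "fwdP X t X0" "lact t \<noteq> Name a" "lact t \<noteq> CoName a"
  using assms by cases auto

lemma SumT_E:
  assumes "fwdP Q t (Sum X Y)"
  obtains (sl) X0 t0 where "Q = Sum X0 Y" "t = PSum L t0" "fwdP X0 t0 X" "std Y"
  | (sr) Y0 t0 where "Q = Sum X Y0" "t = PSum R t0" "fwdP Y0 t0 Y" "std X"
  using assms by cases auto

lemma SumS_E:
  assumes "fwdP (Sum X Y) t Q"
  obtains (sl) X0 t0 where "Q = Sum X0 Y" "t = PSum L t0" "fwdP X t0 X0" "std Y"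
  | (sr) Y0 t0 where "Q = Sum X Y0" "t = PSum R t0" "fwdP Y t0 Y0" "std X"
  using assms by cases auto

lemma bk_det: "fwdP Q t P \<Longrightarrow> fwdP Q2 t' P \<Longrightarrow> lkey t = lkey t' \<Longrightarrow> t = t' \<and> Q = Q2"
proof (induction arbitrary: t' Q2 rule: fwdP.induct)
  case (act X a k)
  from act(2) show ?case
  proof (cases rule: KeyedT_E)
    case ka then show ?thesis using act by simp
  next
    case (kp X0) then show ?thesis using act fwdP_nstd by blast
  qed
next
  case (pre X t X' k a)
  from pre(4) show ?case
  proof (cases rule: KeyedT_E)
    case ka then show ?thesis using pre fwdP_nstd by blast
  next
    case (kp X0) then show ?thesis using pre.IH pre.prems by simp
  qed
next
  case (res X t X' a)
  from res(5) show ?case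
  proof (cases rule: ResT_E)
    case (1 X0) then show ?thesis using res.IH res.prems by simp
  qed
next
  case (parL X t X' Y)
  from parL(4) show ?case
  proof (cases rule: ParT_E)
    case (pl X0 t0) then show ?thesis using parL.IH parL.prems by simp
  next
    case (pr Y0 t0) then show ?thesis using parL.prems fwdP_kin[OF parL.hyps(1)] by simp
  next
    case (ps X0 Y0 t1 t2) then show ?thesis using parL.prems parL.hyps fwdP_kin[of Y0 t2 Y] by simp
  qed
next
  case (parR Y t Y' X)
  from parR(4) show ?case
  proof (cases rule: ParT_E)
    case (pr Y0 t0) then show ?thesis using parR.IH parR.prems by simp
  next
    case (pl X0 t0) then show ?thesis using parR.prems fwdP_kin[OF parR.hyps(1)] by simp
  next
    case (ps X0 Y0 t1 t2) then show ?thesis using parR.prems parR.hyps fwdP_kin[of X0 t1 X] by simp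
  qed
next
  case (syn X t1 X' Y t2 Y')
  from syn(8) show ?case
  proof (cases rule: ParT_E)
    case (pl X0 t0) then show ?thesis using syn.prems syn.hyps fwdP_kin[of Y t2 Y'] by simp
  next
    case (pr Y0 t0) then show ?thesis using syn.prems syn.hyps fwdP_kin[of X t1 X'] by simp
  next
    case (ps X0 Y0 s1 s2)
    then have "t1 = s1 \<and> X = X0" using syn.IH(1)[of X0 s1] syn.prems by simp
    moreover have "t2 = s2 \<and> Y = Y0" using ps syn.IH(2)[of Y0 s2] syn.prems syn.hyps by simp
    ultimately show ?thesis using ps by simp
  qed
next
  case (sumL X t X' Y)
  from sumL(4) show ?case
  proof (cases rule: SumT_E)
    case (sl X0 t0) then show ?thesis using sumL.IH sumL.prems by simp
  next
    case (sr Y0 t0) then show ?thesis using sumL.hyps fwdP_nstd by blast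
  qed
next
  case (sumR Y t Y' X)
  from sumR(4) show ?case
  proof (cases rule: SumT_E)
    case (sr Y0 t0) then show ?thesis using sumR.IH sumR.prems by simp
  next
    case (sl X0 t0) then show ?thesis using sumR.hyps fwdP_nstd by blast
  qed
qed

lemma ep_uniq: "fwdP P t Q \<Longrightarrow> fwdP P t' Q \<Longrightarrow> t = t'"
proof (induction arbitrary: t' rule: fwdP.induct)
  case (act X a k) from act(2) show ?case by (rule PreS_E) simp
next
  case (pre X t X' k a) from pre(4) show ?case by (rule KeyedS_E) (use pre.IH in simp)
next
  case (res X t X' a) from res(5) show ?case by (rule ResS_E) (use res.IH in simp)
next
  case (parL X t X' Y) from parL(4) show ?case
  proof (cases rule: ParS_E)
    case (pl X0 t0) then show ?thesis using parL.IH by simp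
  next
    case (pr Y0 t0) then show ?thesis using fwdP_neq[OF parL.hyps(1)] by simp
  next
    case (ps X0 Y0 t1 t2) then show ?thesis using fwdP_neq[of Y t2 Y0] by simp
  qed
next
  case (parR Y t Y' X) from parR(4) show ?case
  proof (cases rule: ParS_E)
    case (pr Y0 t0) then show ?thesis using parR.IH by simp
  next
    case (pl X0 t0) then show ?thesis using fwdP_neq[OF parR.hyps(1)] by simp
  next
    case (ps X0 Y0 t1 t2) then show ?thesis using fwdP_neq[of X t1 X0] by simp
  qed
next
  case (syn X t1 X' Y t2 Y') from syn(8) show ?case
  proof (cases rule: ParS_E)
    case (pr Y0 t0) then show ?thesis using fwdP_neq[OF syn.hyps(1)] by simp
  next
    case (pl X0 t0) then show ?thesis using fwdP_neq[OF syn.hyps(2)] by simp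
  next
    case (ps X0 Y0 s1 s2) then show ?thesis using syn.IH by simp
  qed
next
  case (sumL X t X' Y) from sumL(4) show ?case
  proof (cases rule: SumS_E)
    case (sl X0 t0) then show ?thesis using sumL.IH by simp
  next
    case (sr Y0 t0) then show ?thesis using fwdP_neq[OF sumL.hyps(1)] by simp
  qed
next
  case (sumR Y t Y' X) from sumR(4) show ?case
  proof (cases rule: SumS_E)
    case (sr Y0 t0) then show ?thesis using sumR.IH by simp
  next
    case (sl X0 t0) then show ?thesis using fwdP_neq[OF sumR.hyps(1)] by simp
  qed
qed

lemma bti_lab: "fwdP Q t P \<Longrightarrow> fwdP Q2 t' P \<Longrightarrow> t \<noteq> t' \<or> Q \<noteq> Q2 \<Longrightarrow> lind t t'"
proof (induction arbitrary: t' Q2 rule: fwdP.induct)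
  case (act X a k)
  from act(2) show ?case
  proof (cases rule: KeyedT_E)
    case ka then show ?thesis using act by simp
  next
    case (kp X0) then show ?thesis using act fwdP_nstd by blast
  qed
next
  case (pre X t X' k a)
  from pre(4) show ?case
  proof (cases rule: KeyedT_E)
    case ka then show ?thesis using pre fwdP_nstd by blast
  next
    case (kp X0) then show ?thesis using pre.IH pre.prems by simp
  qed
next
  case (res X t X' a)
  from res(5) show ?case
  proof (cases rule: ResT_E)
    case (1 X0) then show ?thesis using res.IH res.prems by simp
  qed
next
  case (parL X t X' Y)
  from parL(4) show ?case
  proof (cases rule: ParT_E)
    case (pl X0 t0) then show ?thesis using parL.IH parL.prems by simp
  next
    case (pr Y0 t0) then show ?thesis using parL.prems fwdP_kin[OF parL.hyps(1)] by auto
  next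
    case (ps X0 Y0 t1 t2)
    then have "t \<noteq> t1" using parL.hyps fwdP_kin[of Y0 t2 Y] by auto
    then show ?thesis using ps parL.IH[of X0 t1] by simp
  qed
next
  case (parR Y t Y' X)
  from parR(4) show ?case
  proof (cases rule: ParT_E)
    case (pr Y0 t0) then show ?thesis using parR.IH parR.prems by simp
  next
    case (pl X0 t0) then show ?thesis using parR.prems fwdP_kin[OF parR.hyps(1)] by auto
  next
    case (ps X0 Y0 t1 t2)
    then have "t \<noteq> t2" using parR.hyps fwdP_kin[of X0 t1 X] by auto
    then show ?thesis using ps parR.IH[of Y0 t2] by simp
  qed
next
  case (syn X t1 X' Y t2 Y')
  from syn(8) show ?case
  proof (cases rule: ParT_E)
    case (pl X0 t0)
    then have "t0 \<noteq> t1" using syn.hyps(5) fwdP_kin[OF syn.hyps(2)] by auto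
    then show ?thesis using pl syn.IH(1)[of X0 t0] by simp
  next
    case (pr Y0 t0)
    then have "t0 \<noteq> t2" using syn.hyps(5) fwdP_kin[OF syn.hyps(1)] by auto
    then show ?thesis using pr syn.IH(2)[of Y0 t0] by simp
  next
    case (ps X0 Y0 s1 s2)
    have A: "t1 \<noteq> s1 \<or> X \<noteq> X0"
    proof (rule ccontr)
      assume "\<not> ?thesis"
      then have e: "t1 = s1" "X = X0" by simp_all
      have "lkey t2 = lkey s2" using e syn.hyps(5) ps(7) by simp
      then have "t2 = s2 \<and> Y = Y0" using bk_det[OF syn.hyps(2) ps(4)] by simp
      then show False using e ps(1,2) syn.prems(2) by simp
    qed
    have B: "t2 \<noteq> s2 \<or> Y \<noteq> Y0"
    proof (rule ccontr)
      assume "\<not> ?thesis"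
      then have e: "t2 = s2" "Y = Y0" by simp_all
      have "lkey t1 = lkey s1" using e syn.hyps(5) ps(7) by simp
      then have "t1 = s1 \<and> X = X0" using bk_det[OF syn.hyps(1) ps(3)] by simp
      then show False using e ps(1,2) syn.prems(2) by simp
    qed
    show ?thesis using syn.IH(1)[OF _ A] syn.IH(2)[OF _ B] ps by simp
  qed
next
  case (sumL X t X' Y)
  from sumL(4) show ?case
  proof (cases rule: SumT_E)
    case (sl X0 t0) then show ?thesis using sumL.IH sumL.prems by simp
  next
    case (sr Y0 t0) then show ?thesis using sumL.hyps fwdP_nstd by blast
  qed
next
  case (sumR Y t Y' X)
  from sumR(4) show ?case
  proof (cases rule: SumT_E)
    case (sr Y0 t0) then show ?thesis using sumR.IH sumR.prems by simp
  next
    case (sl X0 t0) then show ?thesis using sumR.hyps fwdP_nstd by blast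
  qed
qed



lemma lind_key_tr: "lind t t' \<Longrightarrow> fwdP A t B \<Longrightarrow> fwdP C t' D \<Longrightarrow> lkey t \<noteq> lkey t'"
  using lind_key fwdP_wfl by blast

lemma L_ff: "fwdP P t Q \<Longrightarrow> fwdP P t' Q2 \<Longrightarrow> lind t t' \<Longrightarrow> \<exists>S. fwdP Q t' S \<and> fwdP Q2 t S"
proof (induction arbitrary: t' Q2 rule: fwdP.induct)
  case (act X a k) then show ?case by simp
next
  case (pre X t X' k a)
  from pre(4) show ?case
  proof (cases rule: KeyedS_E)
    case (kp X0)
    obtain S0 where "fwdP X' t' S0" "fwdP X0 t S0" using pre.IH kp pre.prems by blast
    then show ?thesis using kp pre.hyps by (intro exI[of _ "Keyed a k S0"]) (auto intro: fwdP.intros)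
  qed
next
  case (res X t X' a)
  from res(5) show ?case
  proof (cases rule: ResS_E)
    case (1 X0)
    obtain S0 where "fwdP X' t' S0" "fwdP X0 t S0" using res.IH 1 res.prems by blast
    then show ?thesis using 1 res.hyps by (intro exI[of _ "Res S0 a"]) (auto intro: fwdP.intros)
  qed
next
  case (parL X t X' Y)
  from parL(4) show ?case
  proof (cases rule: ParS_E)
    case (pl X0 t0)
    obtain S0 where "fwdP X' t0 S0" "fwdP X0 t S0" using parL.IH pl parL.prems by auto
    then show ?thesis using pl parL.hyps by (intro exI[of _ "Par S0 Y"]) (auto intro: fwdP.intros)
  next
    case (pr Y0 t0)
    have "lkey t \<noteq> lkey t0" using pr parL.prems by auto
    then show ?thesis using pr parL.hyps fwdP_keys[OF parL.hyps(1)] fwdP_keys[of Y t0 Y0]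
      by (intro exI[of _ "Par X' Y0"]) (auto intro: fwdP.intros)
  next
    case (ps X0 Y0 t1 t2)
    have "lind t t1" using ps parL.prems by auto
    then obtain S0 where "fwdP X' t1 S0" "fwdP X0 t S0" using parL.IH ps by blast
    moreover have "lkey t \<noteq> lkey t1" using \<open>lind t t1\<close> parL.hyps ps lind_key_tr by blast
    ultimately show ?thesis using ps parL.hyps fwdP_keys[of Y t2 Y0]
      by (intro exI[of _ "Par S0 Y0"]) (auto intro: fwdP.intros)
  qed
next
  case (parR Y t Y' X)
  from parR(4) show ?case
  proof (cases rule: ParS_E)
    case (pr Y0 t0)
    obtain S0 where "fwdP Y' t0 S0" "fwdP Y0 t S0" using parR.IH pr parR.prems by auto
    then show ?thesis using pr parR.hyps by (intro exI[of _ "Par X S0"]) (auto intro: fwdP.intros)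
  next
    case (pl X0 t0)
    have "lkey t \<noteq> lkey t0" using pl parR.prems by auto
    then show ?thesis using pl parR.hyps fwdP_keys[OF parR.hyps(1)] fwdP_keys[of X t0 X0]
      by (intro exI[of _ "Par X0 Y'"]) (auto intro: fwdP.intros)
  next
    case (ps X0 Y0 t1 t2)
    have "lind t t2" using ps parR.prems by auto
    then obtain S0 where "fwdP Y' t2 S0" "fwdP Y0 t S0" using parR.IH ps by blast
    moreover have "lkey t \<noteq> lkey t2" using \<open>lind t t2\<close> parR.hyps ps lind_key_tr by blast
    ultimately show ?thesis using ps parR.hyps fwdP_keys[of X t1 X0]
      by (intro exI[of _ "Par X0 S0"]) (auto intro: fwdP.intros)
  qed
next
  case (syn X t1 X' Y t2 Y')
  from syn(8) show ?case
  proof (cases rule: ParS_E)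
    case (pl X0 t0)
    have "lind t1 t0" using pl syn.prems by auto
    then obtain S0 where "fwdP X' t0 S0" "fwdP X0 t1 S0" using syn.IH(1) pl by blast
    moreover have "lkey t1 \<noteq> lkey t0" using \<open>lind t1 t0\<close> syn.hyps pl lind_key_tr by blast
    ultimately show ?thesis using pl syn.hyps fwdP_keys[of Y t2 Y']
      by (intro exI[of _ "Par S0 Y'"]) (auto intro: fwdP.intros)
  next
    case (pr Y0 t0)
    have "lind t2 t0" using pr syn.prems by auto
    then obtain S0 where "fwdP Y' t0 S0" "fwdP Y0 t2 S0" using syn.IH(2) pr by blast
    moreover have "lkey t2 \<noteq> lkey t0" using \<open>lind t2 t0\<close> syn.hyps pr lind_key_tr by blast
    ultimately show ?thesis using pr syn.hyps fwdP_keys[of X t1 X']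
      by (intro exI[of _ "Par X' S0"]) (auto intro: fwdP.intros)
  next
    case (ps X0 Y0 s1 s2)
    have "lind t1 s1" "lind t2 s2" using ps syn.prems by auto
    then obtain S0 S1 where "fwdP X' s1 S0" "fwdP X0 t1 S0" "fwdP Y' s2 S1" "fwdP Y0 t2 S1"
      using syn.IH ps by metis
    then show ?thesis using ps syn.hyps
      by (intro exI[of _ "Par S0 S1"]) (auto intro: fwdP.intros)
  qed
next
  case (sumL X t X' Y)
  from sumL(4) show ?case
  proof (cases rule: SumS_E)
    case (sl X0 t0)
    obtain S0 where "fwdP X' t0 S0" "fwdP X0 t S0" using sumL.IH sl sumL.prems by auto
    then show ?thesis using sl sumL.hyps by (intro exI[of _ "Sum S0 Y"]) (auto intro: fwdP.intros)
  next
    case (sr Y0 t0) then show ?thesis using sumL.prems by auto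
  qed
next
  case (sumR Y t Y' X)
  from sumR(4) show ?case
  proof (cases rule: SumS_E)
    case (sr Y0 t0)
    obtain S0 where "fwdP Y' t0 S0" "fwdP Y0 t S0" using sumR.IH sr sumR.prems by auto
    then show ?thesis using sr sumR.hyps by (intro exI[of _ "Sum X S0"]) (auto intro: fwdP.intros)
  next
    case (sl X0 t0) then show ?thesis using sumR.prems by auto
  qed
qed

lemma L_fb: "fwdP P t Q \<Longrightarrow> fwdP Q2 t' P \<Longrightarrow> lind t t' \<Longrightarrow> \<exists>S. fwdP S t' Q \<and> fwdP Q2 t S"
proof (induction arbitrary: t' Q2 rule: fwdP.induct)
  case (act X a k) then show ?case by simp
next
  case (pre X t X' k a)
  from pre(4) show ?case
  proof (cases rule: KeyedT_E)
    case ka then show ?thesis using pre.prems by simp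
  next
    case (kp X0)
    obtain S0 where "fwdP S0 t' X'" "fwdP X0 t S0" using pre.IH kp pre.prems by blast
    then show ?thesis using kp pre.hyps by (intro exI[of _ "Keyed a k S0"]) (auto intro: fwdP.intros)
  qed
next
  case (res X t X' a)
  from res(5) show ?case
  proof (cases rule: ResT_E)
    case (1 X0)
    obtain S0 where "fwdP S0 t' X'" "fwdP X0 t S0" using res.IH 1 res.prems by blast
    then show ?thesis using 1 res.hyps by (intro exI[of _ "Res S0 a"]) (auto intro: fwdP.intros)
  qed
next
  case (parL X t X' Y)
  from parL(4) show ?case
  proof (cases rule: ParT_E)
    case (pl X0 t0)
    obtain S0 where "fwdP S0 t0 X'" "fwdP X0 t S0" using parL.IH pl parL.prems by auto
    then show ?thesis using pl parL.hyps by (intro exI[of _ "Par S0 Y"]) (auto intro: fwdP.intros)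
  next
    case (pr Y0 t0)
    have "lkey t \<noteq> lkey t0" using pr parL.prems by auto
    then show ?thesis using pr parL.hyps fwdP_keys[OF parL.hyps(1)] fwdP_keys[of Y0 t0 Y]
      by (intro exI[of _ "Par X' Y0"]) (auto intro: fwdP.intros)
  next
    case (ps X0 Y0 t1 t2)
    have "lind t t1" using ps parL.prems by auto
    then obtain S0 where "fwdP S0 t1 X'" "fwdP X0 t S0" using parL.IH ps by blast
    then show ?thesis using ps parL.hyps fwdP_keys[of Y0 t2 Y]
      by (intro exI[of _ "Par S0 Y0"]) (auto intro: fwdP.intros)
  qed
next
  case (parR Y t Y' X)
  from parR(4) show ?case
  proof (cases rule: ParT_E)
    case (pr Y0 t0)
    obtain S0 where "fwdP S0 t0 Y'" "fwdP Y0 t S0" using parR.IH pr parR.prems by auto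
    then show ?thesis using pr parR.hyps by (intro exI[of _ "Par X S0"]) (auto intro: fwdP.intros)
  next
    case (pl X0 t0)
    have "lkey t \<noteq> lkey t0" using pl parR.prems by auto
    then show ?thesis using pl parR.hyps fwdP_keys[OF parR.hyps(1)] fwdP_keys[of X0 t0 X]
      by (intro exI[of _ "Par X0 Y'"]) (auto intro: fwdP.intros)
  next
    case (ps X0 Y0 t1 t2)
    have "lind t t2" using ps parR.prems by auto
    then obtain S0 where "fwdP S0 t2 Y'" "fwdP Y0 t S0" using parR.IH ps by blast
    then show ?thesis using ps parR.hyps fwdP_keys[of X0 t1 X]
      by (intro exI[of _ "Par X0 S0"]) (auto intro: fwdP.intros)
  qed
next
  case (syn X t1 X' Y t2 Y')
  from syn(8) show ?case
  proof (cases rule: ParT_E)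
    case (pl X0 t0)
    have "lind t1 t0" using pl syn.prems by auto
    then obtain S0 where "fwdP S0 t0 X'" "fwdP X0 t1 S0" using syn.IH(1) pl by blast
    moreover have "lkey t1 \<noteq> lkey t0" using \<open>lind t1 t0\<close> syn.hyps pl lind_key_tr by blast
    ultimately show ?thesis using pl syn.hyps fwdP_keys[of Y t2 Y']
      by (intro exI[of _ "Par S0 Y'"]) (auto intro: fwdP.intros)
  next
    case (pr Y0 t0)
    have "lind t2 t0" using pr syn.prems by auto
    then obtain S0 where "fwdP S0 t0 Y'" "fwdP Y0 t2 S0" using syn.IH(2) pr by blast
    moreover have "lkey t2 \<noteq> lkey t0" using \<open>lind t2 t0\<close> syn.hyps pr lind_key_tr by blast
    ultimately show ?thesis using pr syn.hyps fwdP_keys[of X t1 X']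
      by (intro exI[of _ "Par X' S0"]) (auto intro: fwdP.intros)
  next
    case (ps X0 Y0 s1 s2)
    have "lind t1 s1" "lind t2 s2" using ps syn.prems by auto
    then obtain S0 S1 where "fwdP S0 s1 X'" "fwdP X0 t1 S0" "fwdP S1 s2 Y'" "fwdP Y0 t2 S1"
      using syn.IH ps by metis
    then show ?thesis using ps syn.hyps
      by (intro exI[of _ "Par S0 S1"]) (auto intro: fwdP.intros)
  qed
next
  case (sumL X t X' Y)
  from sumL(4) show ?case
  proof (cases rule: SumT_E)
    case (sl X0 t0)
    obtain S0 where "fwdP S0 t0 X'" "fwdP X0 t S0" using sumL.IH sl sumL.prems by auto
    then show ?thesis using sl sumL.hyps by (intro exI[of _ "Sum S0 Y"]) (auto intro: fwdP.intros)
  next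
    case (sr Y0 t0) then show ?thesis using sumL.prems by auto
  qed
next
  case (sumR Y t Y' X)
  from sumR(4) show ?case
  proof (cases rule: SumT_E)
    case (sr Y0 t0)
    obtain S0 where "fwdP S0 t0 Y'" "fwdP Y0 t S0" using sumR.IH sr sumR.prems by auto
    then show ?thesis using sr sumR.hyps by (intro exI[of _ "Sum X S0"]) (auto intro: fwdP.intros)
  next
    case (sl X0 t0) then show ?thesis using sumR.prems by auto
  qed
qed

lemma L_bb: "fwdP Q t P \<Longrightarrow> fwdP Q2 t' P \<Longrightarrow> lind t t' \<Longrightarrow> \<exists>S. fwdP S t' Q \<and> fwdP S t Q2"
proof (induction arbitrary: t' Q2 rule: fwdP.induct)
  case (act X a k) then show ?case by simp
next
  case (pre X t X' k a)
  from pre(4) show ?case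
  proof (cases rule: KeyedT_E)
    case ka then show ?thesis using pre.prems by simp
  next
    case (kp X0)
    obtain S0 where "fwdP S0 t' X" "fwdP S0 t X0" using pre.IH kp pre.prems by blast
    then show ?thesis using kp pre.hyps by (intro exI[of _ "Keyed a k S0"]) (auto intro: fwdP.intros)
  qed
next
  case (res X t X' a)
  from res(5) show ?case
  proof (cases rule: ResT_E)
    case (1 X0)
    obtain S0 where "fwdP S0 t' X" "fwdP S0 t X0" using res.IH 1 res.prems by blast
    then show ?thesis using 1 res.hyps by (intro exI[of _ "Res S0 a"]) (auto intro: fwdP.intros)
  qed
next
  case (parL X t X' Y)
  from parL(4) show ?case
  proof (cases rule: ParT_E)
    case (pl X0 t0)
    obtain S0 where "fwdP S0 t0 X" "fwdP S0 t X0" using parL.IH pl parL.prems by auto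
    then show ?thesis using pl parL.hyps by (intro exI[of _ "Par S0 Y"]) (auto intro: fwdP.intros)
  next
    case (pr Y0 t0)
    show ?thesis using pr parL.hyps fwdP_keys[OF parL.hyps(1)] fwdP_keys[of Y0 t0 Y]
      by (intro exI[of _ "Par X Y0"]) (auto intro: fwdP.intros)
  next
    case (ps X0 Y0 t1 t2)
    have "lind t t1" using ps parL.prems by auto
    then obtain S0 where "fwdP S0 t1 X" "fwdP S0 t X0" using parL.IH ps by blast
    then show ?thesis using ps parL.hyps fwdP_keys[of Y0 t2 Y]
      by (intro exI[of _ "Par S0 Y0"]) (auto intro: fwdP.intros)
  qed
next
  case (parR Y t Y' X)
  from parR(4) show ?case
  proof (cases rule: ParT_E)
    case (pr Y0 t0)
    obtain S0 where "fwdP S0 t0 Y" "fwdP S0 t Y0" using parR.IH pr parR.prems by auto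
    then show ?thesis using pr parR.hyps by (intro exI[of _ "Par X S0"]) (auto intro: fwdP.intros)
  next
    case (pl X0 t0)
    show ?thesis using pl parR.hyps fwdP_keys[OF parR.hyps(1)] fwdP_keys[of X0 t0 X]
      by (intro exI[of _ "Par X0 Y"]) (auto intro: fwdP.intros)
  next
    case (ps X0 Y0 t1 t2)
    have "lind t t2" using ps parR.prems by auto
    then obtain S0 where "fwdP S0 t2 Y" "fwdP S0 t Y0" using parR.IH ps by blast
    then show ?thesis using ps parR.hyps fwdP_keys[of X0 t1 X]
      by (intro exI[of _ "Par X0 S0"]) (auto intro: fwdP.intros)
  qed
next
  case (syn X t1 X' Y t2 Y')
  from syn(8) show ?case
  proof (cases rule: ParT_E)
    case (pl X0 t0)
    have "lind t1 t0" using pl syn.prems by auto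
    then obtain S0 where "fwdP S0 t0 X" "fwdP S0 t1 X0" using syn.IH(1) pl by blast
    then show ?thesis using pl syn.hyps fwdP_keys[of Y t2 Y']
      by (intro exI[of _ "Par S0 Y"]) (auto intro: fwdP.intros)
  next
    case (pr Y0 t0)
    have "lind t2 t0" using pr syn.prems by auto
    then obtain S0 where "fwdP S0 t0 Y" "fwdP S0 t2 Y0" using syn.IH(2) pr by blast
    then show ?thesis using pr syn.hyps fwdP_keys[of X t1 X']
      by (intro exI[of _ "Par X S0"]) (auto intro: fwdP.intros)
  next
    case (ps X0 Y0 s1 s2)
    have "lind t1 s1" "lind t2 s2" using ps syn.prems by auto
    then obtain S0 S1 where "fwdP S0 s1 X" "fwdP S0 t1 X0" "fwdP S1 s2 Y" "fwdP S1 t2 Y0"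
      using syn.IH ps by metis
    then show ?thesis using ps syn.hyps
      by (intro exI[of _ "Par S0 S1"]) (auto intro: fwdP.intros)
  qed
next
  case (sumL X t X' Y)
  from sumL(4) show ?case
  proof (cases rule: SumT_E)
    case (sl X0 t0)
    obtain S0 where "fwdP S0 t0 X" "fwdP S0 t X0" using sumL.IH sl sumL.prems by auto
    then show ?thesis using sl sumL.hyps by (intro exI[of _ "Sum S0 Y"]) (auto intro: fwdP.intros)
  next
    case (sr Y0 t0) then show ?thesis using sumL.prems by auto
  qed
next
  case (sumR Y t Y' X)
  from sumR(4) show ?case
  proof (cases rule: SumT_E)
    case (sr Y0 t0)
    obtain S0 where "fwdP S0 t0 Y" "fwdP S0 t Y0" using sumR.IH sr sumR.prems by auto
    then show ?thesis using sr sumR.hyps by (intro exI[of _ "Sum X S0"]) (auto intro: fwdP.intros)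
  next
    case (sl X0 t0) then show ?thesis using sumR.prems by auto
  qed
qed



lemma lts_mem: "Tr P d l Q \<in> lts f \<longleftrightarrow> (if d then f P l Q else f Q l P) \<and> P \<in> reachable (comb f)"
  by (auto simp: lts_def comb_def)

lemma step_comb: "(P,Q) \<in> step_rel (comb f) \<longleftrightarrow> (\<exists>l. f P l Q \<or> f Q l P)"
proof
  assume "(P,Q) \<in> step_rel (comb f)"
  then show "\<exists>l. f P l Q \<or> f Q l P" by (auto simp: step_rel_def comb_def)
next
  assume "\<exists>l. f P l Q \<or> f Q l P"
  then obtain l where "f P l Q \<or> f Q l P" by blast
  then have "Tr P (f P l Q) l Q \<in> comb f" by (auto simp: comb_def)
  then show "(P,Q) \<in> step_rel (comb f)" unfolding step_rel_def by force
qed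

lemma reach_step: "P \<in> reachable C \<Longrightarrow> (P,Q) \<in> step_rel C \<Longrightarrow> Q \<in> reachable C"
  unfolding reachable_def by (auto intro: rtrancl_into_rtrancl)

lemma lts_sub: "lts f \<subseteq> comb f" by (auto simp: lts_def)

lemma lts_tgt: "t \<in> lts f \<Longrightarrow> tgt t \<in> reachable (comb f)"
  by (rule reach_step[of "src t"]) (auto simp: lts_def step_rel_def)

lemma lts_src: "t \<in> lts f \<Longrightarrow> src t \<in> reachable (comb f)"
  by (auto simp: lts_def)

lemma lts_inv: "t \<in> lts f \<Longrightarrow> inv_tr t \<in> lts f"
proof -
  assume a: "t \<in> lts f"
  obtain P d l Q where t: "t = Tr P d l Q" by (cases t)
  have "Q \<in> reachable (comb f)" using lts_tgt[OF a] t by simp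
  then show ?thesis using a t by (simp add: lts_mem)
qed

lemma step_lts: "(P,Q) \<in> step_rel (lts f) \<longleftrightarrow> P \<in> reachable (comb f) \<and> (P,Q) \<in> step_rel (comb f)"
proof
  assume "(P,Q) \<in> step_rel (lts f)"
  then obtain t where "t \<in> lts f" "P = src t" "Q = tgt t" by (auto simp: step_rel_def)
  then show "P \<in> reachable (comb f) \<and> (P,Q) \<in> step_rel (comb f)"
    by (auto simp: lts_def step_rel_def)
next
  assume "P \<in> reachable (comb f) \<and> (P,Q) \<in> step_rel (comb f)"
  then obtain t where "t \<in> comb f" "P = src t" "Q = tgt t" "P \<in> reachable (comb f)"
    by (auto simp: step_rel_def)
  then have "t \<in> lts f" by (auto simp: lts_def)
  then show "(P,Q) \<in> step_rel (lts f)" using \<open>P = src t\<close> \<open>Q = tgt t\<close> by (auto simp: step_rel_def)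
qed

lemma step_lts_sym: "(P,Q) \<in> step_rel (lts f) \<Longrightarrow> (Q,P) \<in> step_rel (lts f)"
  unfolding step_lts using reach_step step_comb by metis

definition conn :: "(('n, 'k) proc \<Rightarrow> 'l \<Rightarrow> ('n, 'k) proc \<Rightarrow> bool) \<Rightarrow> ('n, 'k) proc \<Rightarrow> ('n, 'k) proc \<Rightarrow> bool" where
  "conn f P Q \<longleftrightarrow> (P,Q) \<in> (step_rel (lts f))\<^sup>*"

lemma conn_refl: "conn f P P" by (simp add: conn_def)

lemma conn_trans: "conn f P Q \<Longrightarrow> conn f Q Z \<Longrightarrow> conn f P Z"
  unfolding conn_def by (rule rtrancl_trans)

lemma conn_sym: "conn f P Q \<Longrightarrow> conn f Q P"
  unfolding conn_def
proof (induction rule: rtrancl_induct)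
  case base then show ?case by simp
next
  case (step y z)
  then show ?case using step_lts_sym converse_rtrancl_into_rtrancl by metis
qed

lemma conn_tr: "t \<in> lts f \<Longrightarrow> conn f (src t) (tgt t)"
  unfolding conn_def step_rel_def by (rule r_into_rtrancl) blast

lemma connected_iff: "t \<in> lts f \<Longrightarrow> u \<in> lts f \<Longrightarrow> connected (lts f) t u \<longleftrightarrow> conn f (src t) (src u)"
  unfolding connected_def conn_def[symmetric]
  by (meson conn_sym conn_tr conn_trans)

lemma finite_keys: "finite (keys X)"
  by (induction X) auto

lemma WF_gen:
  assumes "\<And>t. t \<in> T \<Longrightarrow> \<not> fw t \<Longrightarrow> card (keys (tgt t)) < card (keys (src t))"
  shows "WF T"
  unfolding WF_def
proof
  assume "\<exists>g :: nat \<Rightarrow> (('a, 'b) proc, 'c) tr. \<forall>n. g n \<in> T \<and> \<not> fw (g n) \<and> tgt (g n) = src (g (Suc n))"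
  then obtain g :: "nat \<Rightarrow> (('a, 'b) proc, 'c) tr" where g: "\<And>n. g n \<in> T \<and> \<not> fw (g n) \<and> tgt (g n) = src (g (Suc n))" by blast
  define h where "h n = card (keys (src (g n)))" for n
  have "h (Suc n) < h n" for n using assms g[of n] unfolding h_def by metis
  then have "h n + n \<le> h 0" for n by (induction n) (auto, metis Suc_le_eq add_Suc_right add_less_mono1 order_less_le_trans)
  from this[of "Suc (h 0)"] show False by simp
qed



definition trP :: "('n,'k) proc \<Rightarrow> bool \<Rightarrow> ('n,'k) plabel \<Rightarrow> ('n,'k) proc \<Rightarrow> bool" where
  "trP P d t Q \<longleftrightarrow> (if d then fwdP P t Q else fwdP Q t P)"

lemma diamond:
  assumes "trP P d1 t1 Q" "trP P d2 t2 R0" "lind t1 t2"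
  shows "\<exists>S. trP Q d2 t2 S \<and> trP R0 d1 t1 S"
proof (cases d1; cases d2)
  assume "d1" "d2" then show ?thesis using L_ff assms unfolding trP_def by simp
next
  assume "d1" "\<not> d2" then show ?thesis using L_fb assms unfolding trP_def by simp
next
  assume "\<not> d1" "d2"
  then have "fwdP Q t1 P" "fwdP P t2 R0" using assms unfolding trP_def by simp_all
  then obtain S where "fwdP S t1 R0" "fwdP Q t2 S" using L_fb lind_sym assms(3) by blast
  then show ?thesis using \<open>\<not> d1\<close> \<open>d2\<close> unfolding trP_def by auto
next
  assume "\<not> d1" "\<not> d2" then show ?thesis using L_bb assms unfolding trP_def by simp
qed

lemma TP_mem: "Tr P d t Q \<in> TP \<longleftrightarrow> trP P d t Q \<and> P \<in> reachable (comb fwdP)"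
  unfolding TP_def lts_mem trP_def by simp

lemma TP_memI: "t \<in> TP \<Longrightarrow> trP (src t) (fw t) (lab t) (tgt t)"
  using TP_mem[of "src t" "fw t" "lab t" "tgt t"] by simp

lemma TP_tgt: "t \<in> TP \<Longrightarrow> tgt t \<in> reachable (comb fwdP)"
  unfolding TP_def by (rule lts_tgt)

lemma TP_src: "t \<in> TP \<Longrightarrow> src t \<in> reachable (comb fwdP)"
  unfolding TP_def by (rule lts_src)

lemma TP_inv: "t \<in> TP \<Longrightarrow> inv_tr t \<in> TP"
  unfolding TP_def by (rule lts_inv)

lemma indP_iff: "indP t u \<longleftrightarrow> t \<in> TP \<and> u \<in> TP \<and> conn fwdP (src t) (src u) \<and> lind (lab t) (lab u)"
  unfolding indP_def using connected_iff[of t fwdP u] unfolding TP_def by blast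

lemma SP_P: "SP TP indP"
  unfolding SP_def
proof (intro ballI impI)
  fix t u :: "(('n,'k) proc, ('n,'k) plabel) tr"
  assume tu: "t \<in> TP" "u \<in> TP" "src t = src u \<and> indP t u"
  then have l: "lind (lab t) (lab u)" by (simp add: indP_iff)
  obtain S where S: "trP (tgt t) (fw u) (lab u) S" "trP (tgt u) (fw t) (lab t) S"
    using diamond[OF TP_memI[OF tu(1)] _ l] TP_memI[OF tu(2)] tu(3) by metis
  let ?u' = "Tr (tgt t) (fw u) (lab u) S" and ?t' = "Tr (tgt u) (fw t) (lab t) S"
  have "?u' \<in> TP" "?t' \<in> TP" using S TP_tgt tu by (simp_all add: TP_mem)
  then have "square TP t u ?u' ?t'" using tu unfolding square_def by simp
  then show "\<exists>u' t'. square TP t u u' t'" by blast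
qed

lemma BTI_P: "BTI TP indP"
  unfolding BTI_def
proof (intro ballI impI)
  fix t u :: "(('n,'k) proc, ('n,'k) plabel) tr"
  assume tu: "t \<in> TP" "u \<in> TP" "\<not> fw t \<and> \<not> fw u \<and> src t = src u \<and> t \<noteq> u"
  have a: "fwdP (tgt t) (lab t) (src t)" "fwdP (tgt u) (lab u) (src t)"
    using TP_memI[OF tu(1)] TP_memI[OF tu(2)] tu(3) unfolding trP_def by simp_all
  have "lab t \<noteq> lab u \<or> tgt t \<noteq> tgt u"
    using tu(3) tr.expand by blast
  then have "lind (lab t) (lab u)" using bti_lab[OF a] by blast
  then show "indP t u" using tu by (simp add: indP_iff conn_refl)
qed

lemma card_dec: "fwdP P t Q \<Longrightarrow> card (keys P) < card (keys Q)"
  using fwdP_keys[of P t Q] finite_keys[of P] by simp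

lemma WF_P: "WF TP"
proof (rule WF_gen)
  fix t :: "(('n,'k) proc, ('n,'k) plabel) tr"
  assume "t \<in> TP" "\<not> fw t"
  then have "fwdP (tgt t) (lab t) (src t)" using TP_memI[of t] unfolding trP_def by simp
  then show "card (keys (tgt t)) < card (keys (src t))" by (rule card_dec)
qed

lemma PCI_P: "PCI TP indP"
  unfolding PCI_def
proof (intro allI impI)
  fix t u u' t' :: "(('n,'k) proc, ('n,'k) plabel) tr"
  assume a: "square TP t u u' t' \<and> indP t u"
  then have "u' \<in> TP" "t \<in> TP" "src u' = tgt t" "lab u' = lab u" "lind (lab t) (lab u)"
    unfolding square_def indP_iff by auto
  moreover have "inv_tr t \<in> TP" using TP_inv \<open>t \<in> TP\<close> by blast
  moreover have "src (inv_tr t) = tgt t" "lab (inv_tr t) = lab t" by (cases t; simp)+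
  ultimately show "indP u' (inv_tr t)" by (simp add: indP_iff conn_refl lind_sym)
qed

lemma RPI_P: "RPI TP indP"
  unfolding RPI_def
proof (intro ballI impI)
  fix t u :: "(('n,'k) proc, ('n,'k) plabel) tr"
  assume a: "t \<in> TP" "u \<in> TP" "indP t u"
  have "inv_tr t \<in> TP" using TP_inv a by blast
  moreover have "src (inv_tr t) = tgt t" "lab (inv_tr t) = lab t" by (cases t; simp)+
  moreover have "conn fwdP (tgt t) (src t)" using conn_tr[of t fwdP] a(1) conn_sym unfolding TP_def by blast
  ultimately show "indP (inv_tr t) u" using a by (auto simp: indP_iff intro: conn_trans)
qed

lemma ev_eq_P:
  fixes t t' :: "(('n,'k) proc, ('n,'k) plabel) tr"
  assumes "(t, t') \<in> ev_eq TP indP"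
  shows "t = t' \<or> (lab t = lab t' \<and> conn fwdP (src t) (src t'))"
proof -
  define Sq :: "((('n,'k) proc, ('n,'k) plabel) tr \<times> _) set" where "Sq = {(t, t') | t t'. \<exists>u u'. square TP t u u' t' \<and> indP t u}"
  define Rl :: "((('n,'k) proc, ('n,'k) plabel) tr \<times> _) set" where "Rl = {(a, b). a = b \<or> (lab a = lab b \<and> conn fwdP (src a) (src b))}"
  have "Sq \<subseteq> Rl"
  proof
    fix p assume "p \<in> Sq"
    then obtain a b u u' where p: "p = (a,b)" "square TP a u u' b" by (auto simp: Sq_def)
    then have "lab a = lab b" "src b = tgt u" "src a = src u" "u \<in> TP" by (auto simp: square_def)
    then show "p \<in> Rl" using p conn_tr[of u fwdP] unfolding Rl_def TP_def by auto
  qed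
  moreover have "Rl\<inverse> = Rl" unfolding Rl_def by (auto intro: conn_sym)
  ultimately have "Sq \<union> Sq\<inverse> \<subseteq> Rl" by blast
  moreover have "trans Rl" unfolding Rl_def trans_def by (auto intro: conn_trans)
  moreover have "refl Rl" unfolding Rl_def refl_on_def by auto
  ultimately have "(Sq \<union> Sq\<inverse>)\<^sup>* \<subseteq> Rl"
  proof -
    assume h: "Sq \<union> Sq\<inverse> \<subseteq> Rl" "trans Rl" "refl Rl"
    { fix x y assume "(x,y) \<in> (Sq \<union> Sq\<inverse>)\<^sup>*"
      then have "(x,y) \<in> Rl"
      proof (induction rule: rtrancl_induct)
        case base then show ?case using h(3) by (simp add: refl_on_def)
      next
        case (step y z) then show ?case using h(1,2) unfolding trans_def by blast
      qed }
    then show ?thesis by auto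
  qed
  then show ?thesis using assms unfolding ev_eq_def Let_def Sq_def[symmetric] Rl_def by blast
qed

lemma IRE_P: "IRE TP indP"
  unfolding IRE_def
proof (intro ballI impI)
  fix t t' u :: "(('n,'k) proc, ('n,'k) plabel) tr"
  assume a: "t \<in> TP" "t' \<in> TP" "u \<in> TP" "(t, t') \<in> ev_eq TP indP \<and> indP t' u"
  then have "t = t' \<or> (lab t = lab t' \<and> conn fwdP (src t) (src t'))" using ev_eq_P by blast
  then show "indP t u" using a by (auto simp: indP_iff intro: conn_trans)
qed

lemma all_P: "all_axioms TP indP"
  unfolding all_axioms_def using SP_P BTI_P WF_P PCI_P IRE_P RPI_P by blast



lemma fwdK_P: "fwdK P l Q \<Longrightarrow> \<exists>t. fwdP P t Q \<and> erase t = l"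
proof (induction rule: fwdK.induct)
  case (act X a k) then show ?case by (auto intro!: exI[of _ "PAct a k"] fwdP.act simp: erase_def)
next
  case (pre X b j X' k a)
  then obtain t where "fwdP X t X'" "erase t = (b, j)" by blast
  then show ?case using pre by (auto intro!: exI[of _ t] fwdP.pre simp: erase_def)
next
  case (res X b j X' a)
  then obtain t where "fwdP X t X'" "erase t = (b, j)" by blast
  then show ?case using res by (auto intro!: exI[of _ t] fwdP.res simp: erase_def)
next
  case (parL X b j X' Y)
  then obtain t where "fwdP X t X'" "erase t = (b, j)" by blast
  then show ?case using parL by (auto intro!: exI[of _ "PPar L t"] fwdP.parL simp: erase_def)
next
  case (parR Y b j Y' X)
  then obtain t where "fwdP Y t Y'" "erase t = (b, j)" by blast
  then show ?case using parR by (auto intro!: exI[of _ "PPar R t"] fwdP.parR simp: erase_def)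
next
  case (syn X b k X' Y Y')
  then obtain t1 t2 where "fwdP X t1 X'" "erase t1 = (b, k)" "fwdP Y t2 Y'" "erase t2 = (compl b, k)" by blast
  then show ?case using syn by (auto intro!: exI[of _ "PSyn t1 t2"] fwdP.syn simp: erase_def)
next
  case (sumL X l X' Y)
  then obtain t where "fwdP X t X'" "erase t = l" by blast
  then show ?case using sumL by (auto intro!: exI[of _ "PSum L t"] fwdP.sumL simp: erase_def)
next
  case (sumR Y l Y' X)
  then obtain t where "fwdP Y t Y'" "erase t = l" by blast
  then show ?case using sumR by (auto intro!: exI[of _ "PSum R t"] fwdP.sumR simp: erase_def)
qed

lemma fwdP_K: "fwdP P t Q \<Longrightarrow> fwdK P (erase t) Q"
proof (induction rule: fwdP.induct)
  case (syn X t1 X' Y t2 Y')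
  then show ?case using fwdK.syn[of X "lact t1" "lkey t1" X' Y Y'] by (simp add: erase_def)
qed (auto simp: erase_def intro: fwdK.intros)

lemma fwdK_iff: "fwdK P l Q \<longleftrightarrow> (\<exists>th. fwdP P th Q \<and> erase th = l)"
  using fwdK_P fwdP_K by blast

lemma step_KP: "step_rel (comb fwdK) = step_rel (comb fwdP)"
proof -
  have "(P,Q) \<in> step_rel (comb fwdK) \<longleftrightarrow> (P,Q) \<in> step_rel (comb fwdP)" for P Q
    unfolding step_comb using fwdK_P fwdP_K by meson
  then show ?thesis by (auto simp: set_eq_iff)
qed

lemma reach_KP: "reachable (comb fwdK) = reachable (comb fwdP)"
  unfolding reachable_def step_KP ..

lemma conn_KP:
  fixes P Q :: "('n,'k) proc"
  shows "conn fwdK P Q \<longleftrightarrow> conn fwdP P Q"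
proof -
  have "step_rel (lts (fwdK :: ('n,'k) proc \<Rightarrow> _)) = step_rel (lts fwdP)"
    by (auto simp: step_lts reach_KP step_KP)
  then show ?thesis unfolding conn_def by simp
qed

definition liftK :: "(('n,'k) proc, 'n act \<times> 'k) tr \<Rightarrow> ('n,'k) plabel \<Rightarrow> bool" where
  "liftK t th \<longleftrightarrow> Tr (src t) (fw t) th (tgt t) \<in> TP \<and> erase th = lab t"

lemma TK_mem: "Tr P d l Q \<in> TK \<longleftrightarrow> (\<exists>th. trP P d th Q \<and> erase th = l) \<and> P \<in> reachable (comb fwdP)"
  unfolding TK_def lts_mem reach_KP trP_def fwdK_iff by (cases d) auto

lemma TK_lift: "t \<in> TK \<Longrightarrow> \<exists>th. liftK t th"
  using TK_mem[of "src t" "fw t" "lab t" "tgt t"] unfolding liftK_def TP_mem by auto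

lemma liftK_TK: "liftK t th \<Longrightarrow> t \<in> TK"
  using TK_mem[of "src t" "fw t" "lab t" "tgt t"] unfolding liftK_def TP_mem by auto

lemma trP_uniq: "trP P d th Q \<Longrightarrow> trP P d th' Q \<Longrightarrow> th = th'"
  unfolding trP_def by (cases d) (auto intro: ep_uniq)

lemma trP_wfl: "trP P d th Q \<Longrightarrow> wfl th"
  unfolding trP_def by (cases d) (auto intro: fwdP_wfl)

lemma liftK_uniq: "liftK t th \<Longrightarrow> liftK t th' \<Longrightarrow> th = th'"
  unfolding liftK_def TP_mem using trP_uniq by blast

lemma liftK_tr: "liftK t th \<Longrightarrow> trP (src t) (fw t) th (tgt t)"
  unfolding liftK_def TP_mem by simp

lemma TK_conn: "t \<in> TK \<Longrightarrow> conn fwdP (src t) (tgt t)"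
  using conn_tr[of t fwdK] unfolding TK_def by (simp add: conn_KP)

lemma TK_tgt: "t \<in> TK \<Longrightarrow> tgt t \<in> reachable (comb fwdP)"
  using lts_tgt[of t fwdK] unfolding TK_def by (simp add: reach_KP)

lemma indK_iff: "indK t u \<longleftrightarrow> t \<in> TK \<and> u \<in> TK \<and> conn fwdP (src t) (src u) \<and>
   (\<exists>th th'. liftK t th \<and> liftK u th' \<and> lind th th')"
  unfolding indK_def liftK_def using connected_iff[of t fwdK u] conn_KP unfolding TK_def by auto

lemma SL:
  assumes sq: "square TK t u u' t'" and lt: "liftK t tht" and lu: "liftK u thu" and l: "lind tht thu"
  shows "liftK u' thu \<and> liftK t' tht"
proof -
  obtain thu2 tht2 where l2: "liftK u' thu2" "liftK t' tht2" using sq TK_lift unfolding square_def by blast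
  have e: "src u = src t" "src u' = tgt t" "src t' = tgt u" "tgt t' = tgt u'"
    "lab u' = lab u" "fw u' = fw u" "lab t' = lab t" "fw t' = fw t"
    using sq unfolding square_def by auto
  have a1: "trP (src t) (fw t) tht (tgt t)" "trP (src t) (fw u) thu (tgt u)"
    using liftK_tr[OF lt] liftK_tr[OF lu] e by auto
  obtain SPp where sp: "trP (tgt t) (fw u) thu SPp" "trP (tgt u) (fw t) tht SPp"
    using diamond[OF a1 l] by blast
  have a2: "trP (tgt t) (fw u) thu2 (tgt u')" "trP (tgt u) (fw t) tht2 (tgt u')"
    using liftK_tr[OF l2(1)] liftK_tr[OF l2(2)] e by auto
  have "erase thu2 = erase thu" "erase tht2 = erase tht"
    using l2 lt lu e unfolding liftK_def by auto
  then have k: "lkey thu2 = lkey thu" "lkey tht2 = lkey tht" by (simp_all add: erase_def)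
  have kd: "lkey tht \<noteq> lkey thu" using lind_key[OF l trP_wfl[OF a1(1)] trP_wfl[OF a1(2)]] .
  have "thu2 = thu \<and> tht2 = tht"
  proof (cases "fw u")
    case False
    then have "thu2 = thu \<and> tgt u' = SPp" using bk_det[of "tgt u'" thu2 "tgt t" SPp thu] a2 sp k
      unfolding trP_def by simp
    then show ?thesis using trP_uniq[OF a2(2)] sp(2) by metis
  next
    case True note fu = True
    show ?thesis
    proof (cases "fw t")
      case False
      then have "tht2 = tht \<and> tgt u' = SPp" using bk_det[of "tgt u'" tht2 "tgt u" SPp tht] a2 sp k
        unfolding trP_def by simp
      then show ?thesis using trP_uniq[OF a2(1)] sp(1) by metis
    next
      case True
      have f: "fwdP (tgt t) thu2 (tgt u')" "fwdP (tgt u) tht2 (tgt u')"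
        "fwdP (src t) tht (tgt t)" "fwdP (src t) thu (tgt u)"
        using a1 a2 fu True unfolding trP_def by auto
      have "thu2 \<noteq> tht2" using k kd by auto
      then have "lind thu2 tht2" using bti_lab[OF f(1) f(2)] by blast
      then obtain S0 where s0: "fwdP S0 tht2 (tgt t)" "fwdP S0 thu2 (tgt u)" using L_bb[OF f(1) f(2)] by blast
      have "tht2 = tht \<and> S0 = src t" using bk_det[OF s0(1) f(3)] k by simp
      moreover have "thu2 = thu" using ep_uniq[OF _ f(4)] s0(2) calculation by simp
      ultimately show ?thesis by simp
    qed
  qed
  then show ?thesis using l2 by simp
qed

lemma liftK_inv: "liftK t th \<Longrightarrow> liftK (inv_tr t) th"
  unfolding liftK_def by (cases t) (auto dest: TP_inv)

lemma SP_K: "SP TK indK"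
  unfolding SP_def
proof (intro ballI impI)
  fix t u :: "(('n,'k) proc, 'n act \<times> 'k) tr"
  assume tu: "t \<in> TK" "u \<in> TK" "src t = src u \<and> indK t u"
  then obtain tht thu where l: "liftK t tht" "liftK u thu" "lind tht thu" by (auto simp: indK_iff)
  obtain S where S: "trP (tgt t) (fw u) thu S" "trP (tgt u) (fw t) tht S"
    using diamond[OF liftK_tr[OF l(1)] _ l(3)] liftK_tr[OF l(2)] tu(3) by metis
  let ?u' = "Tr (tgt t) (fw u) (lab u) S" and ?t' = "Tr (tgt u) (fw t) (lab t) S"
  have "?u' \<in> TK" "?t' \<in> TK" using S TK_tgt tu l unfolding TK_mem liftK_def by auto
  then have "square TK t u ?u' ?t'" using tu unfolding square_def by simp
  then show "\<exists>u' t'. square TK t u u' t'" by blast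
qed

lemma BTI_K: "BTI TK indK"
  unfolding BTI_def
proof (intro ballI impI)
  fix t u :: "(('n,'k) proc, 'n act \<times> 'k) tr"
  assume tu: "t \<in> TK" "u \<in> TK" "\<not> fw t \<and> \<not> fw u \<and> src t = src u \<and> t \<noteq> u"
  obtain tht thu where l: "liftK t tht" "liftK u thu" using TK_lift tu by blast
  have a: "fwdP (tgt t) tht (src t)" "fwdP (tgt u) thu (src t)"
    using liftK_tr[OF l(1)] liftK_tr[OF l(2)] tu(3) unfolding trP_def by simp_all
  have "tht \<noteq> thu \<or> tgt t \<noteq> tgt u"
  proof (rule ccontr)
    assume h: "\<not> (tht \<noteq> thu \<or> tgt t \<noteq> tgt u)"
    then have "lab t = lab u" using l unfolding liftK_def by auto
    then show False using tu(3) h tr.expand by blast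
  qed
  then have "lind tht thu" using bti_lab[OF a] by blast
  then show "indK t u" using tu l by (auto simp: indK_iff conn_refl)
qed

lemma WF_K: "WF TK"
proof (rule WF_gen)
  fix t :: "(('n,'k) proc, 'n act \<times> 'k) tr"
  assume "t \<in> TK" "\<not> fw t"
  then obtain th where "liftK t th" using TK_lift by blast
  then have "fwdP (tgt t) th (src t)" using liftK_tr \<open>\<not> fw t\<close> unfolding trP_def by fastforce
  then show "card (keys (tgt t)) < card (keys (src t))" by (rule card_dec)
qed

lemma PCI_K: "PCI TK indK"
  unfolding PCI_def
proof (intro allI impI)
  fix t u u' t' :: "(('n,'k) proc, 'n act \<times> 'k) tr"
  assume a: "square TK t u u' t' \<and> indK t u"
  then obtain tht thu where l: "liftK t tht" "liftK u thu" "lind tht thu" by (auto simp: indK_iff)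
  have "liftK u' thu" using SL a l by blast
  moreover have "liftK (inv_tr t) tht" using liftK_inv l by blast
  moreover have "src (inv_tr t) = tgt t" by (cases t) simp
  moreover have "src u' = tgt t" using a unfolding square_def by simp
  ultimately show "indK u' (inv_tr t)"
    using l(3) lind_sym liftK_TK by (metis indK_iff conn_refl)
qed

lemma RPI_K: "RPI TK indK"
  unfolding RPI_def
proof (intro ballI impI)
  fix t u :: "(('n,'k) proc, 'n act \<times> 'k) tr"
  assume a: "t \<in> TK" "u \<in> TK" "indK t u"
  then obtain tht thu where l: "liftK t tht" "liftK u thu" "lind tht thu" "conn fwdP (src t) (src u)"
    by (auto simp: indK_iff)
  have "liftK (inv_tr t) tht" using liftK_inv l by blast
  moreover have "src (inv_tr t) = tgt t" by (cases t) simp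
  moreover have "conn fwdP (tgt t) (src t)" using TK_conn a(1) conn_sym by blast
  ultimately show "indK (inv_tr t) u" using a l liftK_TK
    by (metis indK_iff conn_trans)
qed

lemma ev_eq_K:
  fixes t t' :: "(('n,'k) proc, 'n act \<times> 'k) tr"
  assumes "(t, t') \<in> ev_eq TK indK"
  shows "t = t' \<or> ((\<forall>th. liftK t th \<longleftrightarrow> liftK t' th) \<and> conn fwdP (src t) (src t'))"
proof -
  define Sq :: "((('n,'k) proc, 'n act \<times> 'k) tr \<times> _) set" where "Sq = {(t, t') | t t'. \<exists>u u'. square TK t u u' t' \<and> indK t u}"
  define Rl :: "((('n,'k) proc, 'n act \<times> 'k) tr \<times> _) set" where
    "Rl = {(a, b). a = b \<or> ((\<forall>th. liftK a th \<longleftrightarrow> liftK b th) \<and> conn fwdP (src a) (src b))}"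
  have "Sq \<subseteq> Rl"
  proof
    fix p assume "p \<in> Sq"
    then obtain a b u u' where p: "p = (a,b)" "square TK a u u' b" "indK a u" by (auto simp: Sq_def)
    then obtain tha thu where l: "liftK a tha" "liftK u thu" "lind tha thu" by (auto simp: indK_iff)
    have lb: "liftK b tha" using SL[OF p(2) l] by blast
    have "\<forall>th. liftK a th \<longleftrightarrow> liftK b th" using l(1) lb liftK_uniq by metis
    moreover have "src b = tgt u" "src a = src u" "u \<in> TK" using p(2) by (auto simp: square_def)
    ultimately show "p \<in> Rl" using p TK_conn[of u] unfolding Rl_def by auto
  qed
  moreover have "Rl\<inverse> = Rl" unfolding Rl_def by (auto intro: conn_sym)
  ultimately have h1: "Sq \<union> Sq\<inverse> \<subseteq> Rl" by blast
  have h2: "trans Rl" unfolding Rl_def trans_def by (auto intro: conn_trans)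
  { fix x y assume "(x,y) \<in> (Sq \<union> Sq\<inverse>)\<^sup>*"
    then have "(x,y) \<in> Rl"
    proof (induction rule: rtrancl_induct)
      case base then show ?case by (simp add: Rl_def)
    next
      case (step y z) then show ?case using h1 h2 unfolding trans_def by blast
    qed }
  then show ?thesis using assms unfolding ev_eq_def Let_def Sq_def[symmetric] Rl_def by blast
qed

lemma IRE_K: "IRE TK indK"
  unfolding IRE_def
proof (intro ballI impI)
  fix t t' u :: "(('n,'k) proc, 'n act \<times> 'k) tr"
  assume a: "t \<in> TK" "t' \<in> TK" "u \<in> TK" "(t, t') \<in> ev_eq TK indK \<and> indK t' u"
  then have "t = t' \<or> ((\<forall>th. liftK t th \<longleftrightarrow> liftK t' th) \<and> conn fwdP (src t) (src t'))" using ev_eq_K by blast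
  then show "indK t u" using a by (auto simp: indK_iff intro: conn_trans)
qed

lemma all_K: "all_axioms TK indK"
  unfolding all_axioms_def using SP_K BTI_K WF_K PCI_K IRE_K RPI_K by blast


theorem theorem6p1:
  shows "all_axioms (TP :: (('n, 'k) proc, ('n, 'k) plabel) tr set) indP
       \<and> all_axioms (TK :: (('n, 'k) proc, 'n act \<times> 'k) tr set) indK"
  using all_P all_K by blast

end
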